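(* Let $n$ be a positive integer and let $(D;H)$ be a based diagram of $(K_n;H)$ with $H=v_1v_2\cdots v_nv_1$. If $M(D;H)=M_n$, then $\varepsilon(D;H)=Z(n)$.
   Context: $K_n$ is the complete graph with vertices $v_1,\dots,v_n$. A based diagram $(D;H)$ of $(K_n;H)$ is a diagram of $K_n$ on $S^2$ in which $H$ is drawn on the equator and every other edge diagram lies (apart from its endpoints) in the Northern or Southern Hemisphere; $e_{(i,j)}$ denotes the edge diagram joining $v_i,v_j$. Let $A$ be the boundary of a small regular neighbourhood of $H$. For edge diagrams $e,f$ not in $H$, $\varepsilon_H(e,f)=1$ if $e,f$ lie in the same hemisphere and their endpoints on $A$ alternate along $A$, and $0$ otherwise; $\varepsilon(D;H)$ is the sum of $\varepsilon_H(e,f)$ over all unordered pairs of distinct edge diagrams not in $H$. The matrix $M(D;H)=(a_{(i,j)})$ has $a_{(i,j)}=0$ if $j\le i+1$ or $(i,j)=(1,n)$, and otherwise $a_{(i,j)}=1$ (resp. $-1$) if $e_{(i,j)}$ is in the Northern (resp. Southern) Hemisphere. $Z(n)=\frac14\lfloor \frac n2\rfloor\lfloor\frac{n-1}2\rfloor\lfloor\frac{n-2}2\rfloor\lfloor\frac{n-3}2\rfloor$. The $n\times n$ matrix $M_n=(a_{(i,j)})$ is defined as follows. If $n$ is even: $a_{(i,j)}=0$ if $j\le i+1$ or $(i,j)=(1,n)$; otherwise $a_{(i,j)}=1$ if ($j\ge i+2$ and $\frac{n+2}{2}-i\le j\le n-i$) or ($j\ge i+2$ and $j\ge \frac{3n+2}{2}-i$);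 and $a_{(i,j)}=-1$ in all other cases. If $n$ is odd: $a_{(i,j)}=0$ if $j\le i+1$ or $(i,j)=(1,n)$; otherwise $a_{(i,j)}=1$ if ($j\ge i+2$ and $\frac{n+3}{2}-i\le j\le n-i$) or ($j\ge i+2$ and $j\ge\frac{3n+1}{2}-i$); and $a_{(i,j)}=-1$ in all other cases. *)

theory Defs
  imports Main Complex_Main
begin

text \<open>A based diagram (D;H) of (K_n;H), H = v_1 v_2 ... v_n v_1, is recorded by its
  hemisphere assignment: N i j = True iff the edge diagram e_(i,j) (i < j) lies in the
  Northern Hemisphere, False iff it lies in the Southern Hemisphere.
  Only the values for edges not in H are relevant.\<close>

definition notH :: "nat \<Rightarrow> nat \<Rightarrow> nat \<Rightarrow> bool" where
  "notH n i j \<longleftrightarrow> 1 \<le> i \<and> i + 2 \<le> j \<and> j \<le> n \<and> \<not> (i = 1 \<and> j = n)"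

definition alternate :: "nat \<Rightarrow> nat \<Rightarrow> nat \<Rightarrow> nat \<Rightarrow> bool" where
  "alternate i j k l \<longleftrightarrow> {i, j} \<inter> {k, l} = {} \<and> ((i < k \<and> k < j) \<noteq> (i < l \<and> l < j))"

text \<open>Each unordered pair {e_(i,j), e_(k,l)}
  is counted once, via the lexicographic order (i,j) < (k,l).\<close>
definition eps :: "nat \<Rightarrow> (nat \<Rightarrow> nat \<Rightarrow> bool) \<Rightarrow> nat" where
  "eps n N = card {((i, j), (k, l)). notH n i j \<and> notH n k l \<and> (i < k \<or> (i = k \<and> j < l))
      \<and> N i j = N k l \<and> alternate i j k l}"

definition Mdiag :: "nat \<Rightarrow> (nat \<Rightarrow> nat \<Rightarrow> bool) \<Rightarrow> nat \<Rightarrow> nat \<Rightarrow> int" where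
  "Mdiag n N i j = (if j \<le> i + 1 \<or> (i = 1 \<and> j = n) then 0 else if N i j then 1 else -1)"

definition Mn :: "nat \<Rightarrow> nat \<Rightarrow> nat \<Rightarrow> int" where
  "Mn n i j = (if j \<le> i + 1 \<or> (i = 1 \<and> j = n) then 0
     else if even n then
       (if (j \<ge> i + 2 \<and> real (n + 2) / 2 - real i \<le> real j \<and> int j \<le> int n - int i)
           \<or> (j \<ge> i + 2 \<and> real j \<ge> real (3 * n + 2) / 2 - real i) then 1 else -1)
     else
       (if (j \<ge> i + 2 \<and> real (n + 3) / 2 - real i \<le> real j \<and> int j \<le> int n - int i)
           \<or> (j \<ge> i + 2 \<and> real j \<ge> real (3 * n + 1) / 2 - real i) then 1 else -1))"

definition Z :: "nat \<Rightarrow> real" where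
  "Z n = (1/4) * of_int (\<lfloor>real n / 2\<rfloor> * \<lfloor>(real n - 1) / 2\<rfloor>
                         * \<lfloor>(real n - 2) / 2\<rfloor> * \<lfloor>(real n - 3) / 2\<rfloor>)"

end

theory Submission
  imports Defs
begin

definition Pairs :: "nat \<Rightarrow> (nat \<times> nat) set" where
  "Pairs N = {(a,b). 1 \<le> a \<and> a < b \<and> b \<le> N}"
definition Tri :: "nat \<Rightarrow> (nat \<times> nat \<times> nat) set" where
  "Tri N = {(a,b,c). 1 \<le> a \<and> a < b \<and> b < c \<and> c \<le> N}"

lemma Pairs_fin: "finite (Pairs N)"
  by (rule finite_subset[of _ "{0..N} \<times> {0..N}"]) (auto simp: Pairs_def)
lemma Tri_fin: "finite (Tri N)"
  by (rule finite_subset[of _ "{0..N} \<times> {0..N} \<times> {0..N}"]) (auto simp: Tri_def)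

lemma card_Pairs: "card (Pairs N) = N choose 2"
proof (induction N)
  case 0
  have "Pairs 0 = {}" by (auto simp: Pairs_def)
  then show ?case by simp
next
  case (Suc N)
  have eq: "Pairs (Suc N) = Pairs N \<union> (\<lambda>a. (a, Suc N)) ` {1..N}"
    by (auto simp: Pairs_def)
  have d: "Pairs N \<inter> (\<lambda>a. (a, Suc N)) ` {1..N} = {}" by (auto simp: Pairs_def)
  have "card (Pairs (Suc N)) = card (Pairs N) + card ((\<lambda>a. (a, Suc N)) ` {1..N})"
    unfolding eq by (rule card_Un_disjoint) (use Pairs_fin d in auto)
  also have "card ((\<lambda>a. (a, Suc N)) ` {1..N}) = N"
    by (subst card_image) (auto simp: inj_on_def)
  finally show ?case using Suc by (simp add: choose_reduce_nat)
qed

lemma card_Tri: "card (Tri N) = N choose 3"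
proof (induction N)
  case 0
  have "Tri 0 = {}" by (auto simp: Tri_def)
  then show ?case by simp
next
  case (Suc N)
  have eq: "Tri (Suc N) = Tri N \<union> (\<lambda>(a,b). (a, b, Suc N)) ` Pairs N"
  proof (rule set_eqI, rule iffI)
    fix y assume "y \<in> Tri (Suc N)"
    then obtain a b c where y: "y = (a,b,c)" and h: "1 \<le> a" "a < b" "b < c" "c \<le> Suc N" by (auto simp: Tri_def)
    show "y \<in> Tri N \<union> (\<lambda>(a,b). (a, b, Suc N)) ` Pairs N"
    proof (cases "c = Suc N")
      case True
      then show ?thesis using h y by (auto simp: Pairs_def image_iff)
    next
      case False
      then show ?thesis using h y by (auto simp: Tri_def)
    qed
  qed (auto simp: Tri_def Pairs_def)
  have d: "Tri N \<inter> (\<lambda>(a,b). (a, b, Suc N)) ` Pairs N = {}" by (auto simp: Tri_def Pairs_def)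
  have "card (Tri (Suc N)) = card (Tri N) + card ((\<lambda>(a,b). (a, b, Suc N)) ` Pairs N)"
    unfolding eq by (rule card_Un_disjoint) (use Tri_fin Pairs_fin d in auto)
  also have "card ((\<lambda>(a,b). (a, b, Suc N)) ` Pairs N) = N choose 2"
    by (subst card_image) (auto simp: inj_on_def card_Pairs)
  finally show ?case using Suc by (simp add: choose_reduce_nat numeral_eq_Suc)
qed

definition Tau :: "nat \<Rightarrow> (nat \<times> nat \<times> nat) set" where
  "Tau x = {(i,k,j). 1 \<le> i \<and> i < k \<and> k < j \<and> i + j \<le> x}"

lemma Tau_fin: "finite (Tau x)"
  by (rule finite_subset[of _ "{0..x} \<times> {0..x} \<times> {0..x}"]) (auto simp: Tau_def)

lemma card_Tau: "card (Tau x) + card (Tau (Suc x)) = x choose 3"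
proof -
  let ?A = "{(a,b,c). 1 \<le> a \<and> a < b \<and> b < c \<and> c \<le> x \<and> a + c \<le> Suc x}"
  let ?B = "{(a,b,c). 1 \<le> a \<and> a < b \<and> b < c \<and> c \<le> x \<and> Suc (Suc x) \<le> a + c}"
  have e1: "Tri x = ?A \<union> ?B" by (auto simp: Tri_def)
  have fA: "finite ?A" by (rule finite_subset[OF _ Tri_fin[of x]]) (auto simp: Tri_def)
  have fB: "finite ?B" by (rule finite_subset[OF _ Tri_fin[of x]]) (auto simp: Tri_def)
  have "card (Tri x) = card ?A + card ?B"
    unfolding e1 by (rule card_Un_disjoint) (use fA fB in auto)
  moreover have "?A = Tau (Suc x)" by (auto simp: Tau_def)
  moreover have "?B = (\<lambda>(i,k,j). (Suc x - j, Suc x - k, Suc x - i)) ` Tau x"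
  proof (rule set_eqI, rule iffI)
    fix y assume "y \<in> ?B"
    then obtain a b c where y: "y = (a,b,c)" and h: "1 \<le> a" "a < b" "b < c" "c \<le> x" "Suc (Suc x) \<le> a + c" by auto
    show "y \<in> (\<lambda>(i,k,j). (Suc x - j, Suc x - k, Suc x - i)) ` Tau x"
      by (rule image_eqI[of _ _ "(Suc x - c, Suc x - b, Suc x - a)"]) (use h y in \<open>auto simp: Tau_def\<close>)
  qed (auto simp: Tau_def)
  moreover have "card ((\<lambda>(i,k,j). (Suc x - j, Suc x - k, Suc x - i)) ` Tau x) = card (Tau x)"
    by (rule card_image) (auto simp: inj_on_def Tau_def)
  ultimately show ?thesis using card_Tri[of x] by simp
qed

lemma card_eq_witness:
  assumes "\<forall>a\<in>A. g (f a) = a" "\<forall>b\<in>B. f (g b) = b" "f ` A \<subseteq> B" "g ` B \<subseteq> A"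
  shows "card A = card B"
  using bij_betw_same_card[OF bij_betw_byWitness[OF assms]] .

definition col :: "nat \<Rightarrow> nat \<Rightarrow> bool" where
  "col n s = (if even n then (n div 2 + 1 \<le> s \<and> s \<le> n) \<or> 3 * (n div 2) + 1 \<le> s
              else (n div 2 + 2 \<le> s \<and> s \<le> n) \<or> 3 * (n div 2) + 2 \<le> s)"

lemma col_even: "col (2*m) s = ((m + 1 \<le> s \<and> s \<le> 2*m) \<or> 3*m + 1 \<le> s)"
  by (simp add: col_def)
lemma col_odd: "col (2*m+1) s = ((m + 2 \<le> s \<and> s \<le> 2*m+1) \<or> 3*m + 2 \<le> s)"
  by (simp add: col_def)

definition G1 :: "nat \<Rightarrow> (nat \<times> nat \<times> nat) set" where
  "G1 m = {(i,k,j). 1 \<le> i \<and> i < k \<and> k < j \<and> j \<le> 2*m \<and> col (2*m+1) (i+j) = col (2*m+1) (k+(2*m+1))}"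

lemma card_G1: "card (G1 m) = (Suc m choose 3) + 2 * (m choose 3)"
proof -
  define P1 where "P1 = {(i,k,j). 1 \<le> i \<and> i < k \<and> k < j \<and> j \<le> 2*m \<and> k \<le> m \<and> i + j \<le> m+1}"
  define P2 where "P2 = {(i,k,j). 1 \<le> i \<and> i < k \<and> k < j \<and> j \<le> 2*m \<and> k \<le> m \<and> 2*m+2 \<le> i + j}"
  define P3 where "P3 = {(i,k,j). 1 \<le> i \<and> i < k \<and> k < j \<and> j \<le> 2*m \<and> m+1 \<le> k \<and> i + j \<le> 2*m+1}"
  define P4 where "P4 = {(i,k,j). 1 \<le> i \<and> i < k \<and> k < j \<and> j \<le> 2*m \<and> m+1 \<le> k \<and> 3*m+2 \<le> i + j}"
  have fin: "finite (G1 m)"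
    by (rule finite_subset[of _ "{0..2*m} \<times> {0..2*m} \<times> {0..2*m}"]) (auto simp: G1_def)
  have eq: "G1 m = (P1 \<union> P2) \<union> (P3 \<union> P4)"
    unfolding G1_def P1_def P2_def P3_def P4_def col_odd by (auto; linarith)
  have f1: "finite (P1 \<union> P2)" "finite (P3 \<union> P4)" using fin eq by auto
  have c: "card (G1 m) = card (P1 \<union> P2) + card (P3 \<union> P4)"
    unfolding eq by (rule card_Un_disjoint) (use f1 in \<open>auto simp: P1_def P2_def P3_def P4_def\<close>)
  have c12: "card (P1 \<union> P2) = card P1 + card P2"
    by (rule card_Un_disjoint) (use f1 in \<open>auto simp: P1_def P2_def\<close>)
  have c34: "card (P3 \<union> P4) = card P3 + card P4"
    by (rule card_Un_disjoint) (use f1 in \<open>auto simp: P3_def P4_def\<close>)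
  have e1: "P1 = Tau (m+1)" unfolding P1_def Tau_def by auto
  have e2: "card P2 = card (Tri m)"
    by (rule card_eq_witness[where f="\<lambda>(i,k,j). (2*m+1-j, i, k)" and g="\<lambda>(a,b,c). (b, c, 2*m+1-a)"])
       (auto simp: P2_def Tri_def)
  have e3: "card P3 = card (Tri (m+1))"
    by (rule card_eq_witness[where f="\<lambda>(i,k,j). (i, 2*m+2-j, 2*m+2-k)" and g="\<lambda>(a,b,c). (a, 2*m+2-c, 2*m+2-b)"])
       (auto simp: P3_def Tri_def)
  have e4: "card P4 = card (Tau m)"
    by (rule card_eq_witness[where f="\<lambda>(i,k,j). (2*m+1-j, 2*m+1-k, 2*m+1-i)" and g="\<lambda>(i,k,j). (2*m+1-j, 2*m+1-k, 2*m+1-i)"])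
       (auto simp: P4_def Tau_def)
  have "card (G1 m) = card (Tau m) + card (Tau (Suc m)) + (Suc m choose 3) + (m choose 3)"
    using c c12 c34 e1 e2 e3 e4 card_Tri by simp
  then show ?thesis using card_Tau[of m] by linarith
qed

definition G2 :: "nat \<Rightarrow> (nat \<times> nat \<times> nat) set" where
  "G2 m = {(i,k,j). 1 \<le> i \<and> i < k \<and> k < j \<and> j + 1 \<le> 2*m \<and> col (2*m) (i+j) = col (2*m) (k+2*m)}"

lemma card_G2: "card (G2 (Suc m)) = 2 * (Suc m choose 3) + (m choose 3)"
proof -
  define M where "M = Suc m"
  define P1 where "P1 = {(i,k,j). 1 \<le> i \<and> i < k \<and> k < j \<and> j + 1 \<le> 2*M \<and> k \<le> M \<and> i + j \<le> M}"
  define P2 where "P2 = {(i,k,j). 1 \<le> i \<and> i < k \<and> k < j \<and> j + 1 \<le> 2*M \<and> k \<le> M \<and> 2*M+1 \<le> i + j}"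
  define P3 where "P3 = {(i,k,j). 1 \<le> i \<and> i < k \<and> k < j \<and> j + 1 \<le> 2*M \<and> M+1 \<le> k \<and> i + j \<le> 2*M}"
  define P4 where "P4 = {(i,k,j). 1 \<le> i \<and> i < k \<and> k < j \<and> j + 1 \<le> 2*M \<and> M+1 \<le> k \<and> 3*M+1 \<le> i + j}"
  have fin: "finite (G2 M)"
    by (rule finite_subset[of _ "{0..2*M} \<times> {0..2*M} \<times> {0..2*M}"]) (auto simp: G2_def)
  have eq: "G2 M = (P1 \<union> P2) \<union> (P3 \<union> P4)"
    unfolding G2_def P1_def P2_def P3_def P4_def col_even by (auto; linarith)
  have f1: "finite (P1 \<union> P2)" "finite (P3 \<union> P4)" using fin eq by auto
  have c: "card (G2 M) = card (P1 \<union> P2) + card (P3 \<union> P4)"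
    unfolding eq by (rule card_Un_disjoint) (use f1 in \<open>auto simp: P1_def P2_def P3_def P4_def\<close>)
  have c12: "card (P1 \<union> P2) = card P1 + card P2"
    by (rule card_Un_disjoint) (use f1 in \<open>auto simp: P1_def P2_def\<close>)
  have c34: "card (P3 \<union> P4) = card P3 + card P4"
    by (rule card_Un_disjoint) (use f1 in \<open>auto simp: P3_def P4_def\<close>)
  have e1: "P1 = Tau M" unfolding P1_def Tau_def M_def by auto
  have e2: "card P2 = card (Tri M)"
    by (rule card_eq_witness[where f="\<lambda>(i,k,j). (2*M-j, i, k)" and g="\<lambda>(a,b,c). (b, c, 2*M-a)"])
       (auto simp: P2_def Tri_def)
  have e3: "card P3 = card (Tri M)"
    by (rule card_eq_witness[where f="\<lambda>(i,k,j). (i, 2*M+1-j, 2*M+1-k)" and g="\<lambda>(a,b,c). (a, 2*M+1-c, 2*M+1-b)"])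
       (auto simp: P3_def Tri_def)
  have e4: "card P4 = card (Tau m)"
    by (rule card_eq_witness[where f="\<lambda>(i,k,j). (2*M-j, 2*M-k, 2*M-i)" and g="\<lambda>(i,k,j). (2*M-j, 2*M-k, 2*M-i)"])
       (auto simp: P4_def Tau_def M_def)
  show ?thesis using c c12 c34 e1 e2 e3 e4 card_Tri card_Tau[of m] unfolding M_def by simp
qed

definition T :: "nat \<Rightarrow> (nat \<times> nat \<times> nat \<times> nat) set" where
  "T n = {(i,k,j,l). 1 \<le> i \<and> i < k \<and> k < j \<and> j < l \<and> l \<le> n \<and> col n (i+j) = col n (k+l)}"

lemma T_fin: "finite (T n)"
  by (rule finite_subset[of _ "{0..n} \<times> {0..n} \<times> {0..n} \<times> {0..n}"]) (auto simp: T_def)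

lemma G1_fin: "finite (G1 m)"
  by (rule finite_subset[of _ "{0..2*m} \<times> {0..2*m} \<times> {0..2*m}"]) (auto simp: G1_def)
lemma G2_fin: "finite (G2 m)"
  by (rule finite_subset[of _ "{0..2*m} \<times> {0..2*m} \<times> {0..2*m}"]) (auto simp: G2_def)

lemma col_refl:
  assumes "3 \<le> s" "s + 1 \<le> 4*m"
  shows "col (2*m) (4*m+2-s) = (\<not> col (2*m+1) s)"
  using assms unfolding col_even col_odd by auto

lemma rec_odd: "card (T (2*m+1)) = card (T (2*m)) + card (G1 m)"
proof -
  define n where "n = 2*m+1"
  define A where "A = {(i,k,j,l). 1 \<le> i \<and> i < k \<and> k < j \<and> j < l \<and> l \<le> 2*m \<and> col n (i+j) = col n (k+l)}"
  define f where "f = (\<lambda>(i::nat,k::nat,j::nat,l::nat). (n-l, n-j, n-k, n-i))"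
  have eq: "T n = A \<union> (\<lambda>(i,k,j). (i,k,j,n)) ` G1 m"
  proof (rule set_eqI, rule iffI)
    fix x assume "x \<in> T n"
    then obtain i k j l where x: "x = (i,k,j,l)" and h: "1 \<le> i" "i < k" "k < j" "j < l" "l \<le> n" "col n (i+j) = col n (k+l)"
      by (auto simp: T_def)
    show "x \<in> A \<union> (\<lambda>(i,k,j). (i,k,j,n)) ` G1 m"
    proof (cases "l = n")
      case True
      then show ?thesis using h x by (auto simp: G1_def n_def image_iff)
    next
      case False
      then show ?thesis using h x by (auto simp: A_def n_def)
    qed
  qed (auto simp: T_def A_def G1_def n_def)
  have fA: "finite A" by (rule finite_subset[OF _ T_fin[of n]]) (auto simp: A_def T_def n_def)
  have "card (T n) = card A + card ((\<lambda>(i,k,j). (i,k,j,n)) ` G1 m)"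
    unfolding eq by (rule card_Un_disjoint) (use fA G1_fin in \<open>auto simp: A_def n_def G1_def\<close>)
  moreover have "card ((\<lambda>(i,k,j). (i,k,j,n)) ` G1 m) = card (G1 m)"
    by (rule card_image) (auto simp: inj_on_def)
  moreover have "card A = card (T (2*m))"
  proof (rule card_eq_witness[where f=f and g=f])
    show "\<forall>a\<in>A. f (f a) = a" by (auto simp: A_def f_def n_def)
    show "\<forall>b\<in>T (2*m). f (f b) = b" by (auto simp: T_def f_def n_def)
    show "f ` A \<subseteq> T (2*m)"
    proof
      fix y assume "y \<in> f ` A"
      then obtain i k j l where y: "y = f (i,k,j,l)" and h: "1 \<le> i" "i < k" "k < j" "j < l" "l \<le> 2*m" "col n (i+j) = col n (k+l)"
        by (auto simp: A_def)
      have e1: "(n-l) + (n-k) = 4*m+2-(k+l)" "(n-j)+(n-i) = 4*m+2-(i+j)" using h by (auto simp: n_def)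
      have "col (2*m) ((n-l) + (n-k)) = col (2*m) ((n-j)+(n-i))"
        unfolding e1 using h col_refl[of "k+l" m] col_refl[of "i+j" m] by (auto simp: n_def)
      moreover have "1 \<le> n-l" "n-l < n-j" "n-j < n-k" "n-k < n-i" "n-i \<le> 2*m" using h by (auto simp: n_def)
      ultimately show "y \<in> T (2*m)" using y by (simp add: T_def f_def add.commute)
    qed
    show "f ` T (2*m) \<subseteq> A"
    proof
      fix y assume "y \<in> f ` T (2*m)"
      then obtain i k j l where y: "y = f (i,k,j,l)" and h: "1 \<le> i" "i < k" "k < j" "j < l" "l \<le> 2*m" "col (2*m) (i+j) = col (2*m) (k+l)"
        by (auto simp: T_def)
      have c1: "col n ((n-l) + (n-k)) = (\<not> col (2*m) (k+l))"
      proof -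
        have a: "k+l = 4*m+2-((n-l) + (n-k))" "3 \<le> (n-l) + (n-k)" "(n-l) + (n-k) + 1 \<le> 4*m" using h by (auto simp: n_def)
        show ?thesis using col_refl[OF a(2,3)] unfolding a(1)[symmetric] by (simp add: n_def)
      qed
      have c2: "col n ((n-j) + (n-i)) = (\<not> col (2*m) (i+j))"
      proof -
        have a: "i+j = 4*m+2-((n-j) + (n-i))" "3 \<le> (n-j) + (n-i)" "(n-j) + (n-i) + 1 \<le> 4*m" using h by (auto simp: n_def)
        show ?thesis using col_refl[OF a(2,3)] unfolding a(1)[symmetric] by (simp add: n_def)
      qed
      have "col n ((n-l) + (n-k)) = col n ((n-j)+(n-i))" using c1 c2 h by simp
      moreover have "1 \<le> n-l" "n-l < n-j" "n-j < n-k" "n-k < n-i" "n-i \<le> 2*m" using h by (auto simp: n_def)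
      ultimately show "y \<in> A" using y by (simp add: A_def f_def add.commute)
    qed
  qed
  ultimately show ?thesis by (simp add: n_def)
qed

definition rho :: "nat \<Rightarrow> nat \<Rightarrow> nat" where
  "rho m x = (if x \<le> Suc m then x + m else x - Suc m)"
definition sig :: "nat \<Rightarrow> nat \<Rightarrow> nat" where
  "sig m y = (if m + 1 \<le> y then y - m else y + Suc m)"

lemma col_rot:
  assumes "1 \<le> x" "x \<le> 2*m+1" "1 \<le> y" "y \<le> 2*m+1" "x \<noteq> y"
  shows "col (2*m+1) (rho m x + rho m y) = col (2 * Suc m) (x + y)"
  using assms unfolding col_even[of "Suc m"] col_odd rho_def by auto

definition phi :: "nat \<Rightarrow> nat \<times> nat \<times> nat \<times> nat \<Rightarrow> nat \<times> nat \<times> nat \<times> nat" where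
  "phi m = (\<lambda>(i,k,j,l). let r = rho m in
     if l \<le> Suc m then (r i, r k, r j, r l)
     else if j \<le> Suc m then (r l, r i, r k, r j)
     else if k \<le> Suc m then (r j, r l, r i, r k)
     else if i \<le> Suc m then (r k, r j, r l, r i)
     else (r i, r k, r j, r l))"

definition psi :: "nat \<Rightarrow> nat \<times> nat \<times> nat \<times> nat \<Rightarrow> nat \<times> nat \<times> nat \<times> nat" where
  "psi m = (\<lambda>(a,b,c,d). let s = sig m in
     if m + 1 \<le> a then (s a, s b, s c, s d)
     else if m + 1 \<le> b then (s b, s c, s d, s a)
     else if m + 1 \<le> c then (s c, s d, s a, s b)
     else if m + 1 \<le> d then (s d, s a, s b, s c)
     else (s a, s b, s c, s d))"

lemma phi_mem:
  assumes "1 \<le> i" "i<k" "k<j" "j<l" "l \<le> 2*m+1" "col (2*Suc m) (i+j) = col (2*Suc m) (k+l)"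
  shows "phi m (i,k,j,l) \<in> T (2*m+1)"
proof -
  have ci: "col (2*m+1) (rho m i + rho m j) = col (2*m+1) (rho m k + rho m l)"
    using col_rot[of i m j] col_rot[of k m l] assms by auto
  show ?thesis
    using assms ci by (auto simp: T_def phi_def Let_def ac_simps) (auto simp: rho_def)
qed

lemma psi_mem:
  assumes "1 \<le> a" "a<b" "b<c" "c<d" "d \<le> 2*m+1" "col (2*m+1) (a+c) = col (2*m+1) (b+d)"
  shows "psi m (a,b,c,d) \<in> T (2*Suc m)"
proof -
  have rs: "\<And>y. 1 \<le> y \<Longrightarrow> y \<le> 2*m+1 \<Longrightarrow> rho m (sig m y) = y"
    and sr: "\<And>y. 1 \<le> y \<Longrightarrow> y \<le> 2*m+1 \<Longrightarrow> 1 \<le> sig m y \<and> sig m y \<le> 2*m+1"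
    and si: "\<And>x y. 1 \<le> x \<Longrightarrow> x \<le> 2*m+1 \<Longrightarrow> 1 \<le> y \<Longrightarrow> y \<le> 2*m+1 \<Longrightarrow> x \<noteq> y \<Longrightarrow> sig m x \<noteq> sig m y"
    by (auto simp: rho_def sig_def)
  have cc: "\<And>x y. 1 \<le> x \<Longrightarrow> x \<le> 2*m+1 \<Longrightarrow> 1 \<le> y \<Longrightarrow> y \<le> 2*m+1 \<Longrightarrow> x \<noteq> y \<Longrightarrow>
     col (2 * Suc m) (sig m x + sig m y) = col (2*m+1) (x + y)"
  proof -
    fix x y assume h: "1 \<le> x" "x \<le> 2*m+1" "1 \<le> y" "y \<le> 2*m+1" "x \<noteq> y"
    show "col (2 * Suc m) (sig m x + sig m y) = col (2*m+1) (x + y)"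
      using col_rot[of "sig m x" m "sig m y"] sr[OF h(1,2)] sr[OF h(3,4)] si[OF h] rs[OF h(1,2)] rs[OF h(3,4)] by simp
  qed
  have ci: "col (2 * Suc m) (sig m a + sig m c) = col (2 * Suc m) (sig m b + sig m d)"
    using cc[of a c] cc[of b d] assms by auto
  show ?thesis
    using assms ci by (auto simp: T_def psi_def Let_def ac_simps) (auto simp: sig_def)
qed

lemma psi_phi:
  assumes "1 \<le> i" "i<k" "k<j" "j<l" "l \<le> 2*m+1"
  shows "psi m (phi m (i,k,j,l)) = (i,k,j,l)"
  using assms by (auto simp: phi_def psi_def Let_def rho_def sig_def)

lemma phi_psi:
  assumes "1 \<le> a" "a<b" "b<c" "c<d" "d \<le> 2*m+1"
  shows "phi m (psi m (a,b,c,d)) = (a,b,c,d)"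
  using assms by (auto simp: phi_def psi_def Let_def rho_def sig_def)

lemma rec_even: "card (T (2*Suc m)) = card (T (2*m+1)) + card (G2 (Suc m))"
proof -
  define n where "n = 2*Suc m"
  define A where "A = {(i,k,j,l). 1 \<le> i \<and> i < k \<and> k < j \<and> j < l \<and> l \<le> 2*m+1 \<and> col n (i+j) = col n (k+l)}"
  have eq: "T n = A \<union> (\<lambda>(i,k,j). (i,k,j,n)) ` G2 (Suc m)"
  proof (rule set_eqI, rule iffI)
    fix x assume "x \<in> T n"
    then obtain i k j l where x: "x = (i,k,j,l)" and h: "1 \<le> i" "i < k" "k < j" "j < l" "l \<le> n" "col n (i+j) = col n (k+l)"
      by (auto simp: T_def)
    show "x \<in> A \<union> (\<lambda>(i,k,j). (i,k,j,n)) ` G2 (Suc m)"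
    proof (cases "l = n")
      case True
      then show ?thesis using h x by (auto simp: G2_def n_def image_iff)
    next
      case False
      then show ?thesis using h x by (auto simp: A_def n_def)
    qed
  qed (auto simp: T_def A_def G2_def n_def)
  have fA: "finite A" by (rule finite_subset[OF _ T_fin[of n]]) (auto simp: A_def T_def n_def)
  have "card (T n) = card A + card ((\<lambda>(i,k,j). (i,k,j,n)) ` G2 (Suc m))"
    unfolding eq by (rule card_Un_disjoint) (use fA G2_fin[of "Suc m"] in \<open>auto simp: A_def n_def\<close>)
  moreover have "card ((\<lambda>(i,k,j). (i,k,j,n)) ` G2 (Suc m)) = card (G2 (Suc m))"
    by (rule card_image) (auto simp: inj_on_def)
  moreover have "card A = card (T (2*m+1))"
  proof (rule card_eq_witness[where f="phi m" and g="psi m"])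
    show "\<forall>a\<in>A. psi m (phi m a) = a" using psi_phi by (auto simp: A_def)
    show "\<forall>b\<in>T (2*m+1). phi m (psi m b) = b" using phi_psi by (auto simp: T_def)
    show "phi m ` A \<subseteq> T (2*m+1)" using phi_mem by (auto simp: A_def n_def)
    show "psi m ` T (2*m+1) \<subseteq> A"
    proof
      fix y assume "y \<in> psi m ` T (2*m+1)"
      then obtain a b c d where y: "y = psi m (a,b,c,d)" and h: "1 \<le> a" "a<b" "b<c" "c<d" "d \<le> 2*m+1" "col (2*m+1) (a+c) = col (2*m+1) (b+d)"
        by (auto simp: T_def)
      have "psi m (a,b,c,d) \<in> T (2*Suc m)" by (rule psi_mem[OF h])
      moreover obtain i k j l where e: "psi m (a,b,c,d) = (i,k,j,l)" by (metis prod_cases4)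
      moreover have "l \<le> 2*m+1"
        using h e by (auto simp: psi_def Let_def sig_def split: if_splits)
      ultimately show "y \<in> A" unfolding y A_def n_def T_def by auto
    qed
  qed
  ultimately show ?thesis by (simp add: n_def)
qed

lemma choose2_int: "2 * int (n choose 2) = int n * (int n - 1)"
proof (induction n)
  case 0 then show ?case by simp
next
  case (Suc n)
  have "Suc n choose 2 = (n choose 1) + (n choose 2)"
    by (simp add: numeral_2_eq_2)
  then show ?case using Suc by (simp add: algebra_simps)
qed

lemma choose3_int: "6 * int (n choose 3) = int n * (int n - 1) * (int n - 2)"
proof (induction n)
  case 0 then show ?case by simp
next
  case (Suc n)
  have "Suc n choose 3 = (n choose 2) + (n choose 3)"
    by (simp add: numeral_3_eq_3 numeral_2_eq_2)
  then show ?case using Suc choose2_int[of n] by (simp add: algebra_simps)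
qed

lemma T0: "T 0 = {}" by (auto simp: T_def)

lemma closed:
  "4 * int (card (T (2*m))) = int m * (int m - 1)^2 * (int m - 2) \<and>
   4 * int (card (T (2*m+1))) = (int m)^2 * (int m - 1)^2"
proof (induction m)
  case 0
  have "T 1 = {}" by (auto simp: T_def)
  then show ?case by (simp add: T0)
next
  case (Suc m)
  have a: "4 * int (card (T (2*Suc m))) = 4 * int (card (T (2*m+1))) + 4 * int (card (G2 (Suc m)))"
    using rec_even[of m] by simp
  have b: "6 * int (card (G2 (Suc m))) = 2 * (int (Suc m) * (int (Suc m) - 1) * (int (Suc m) - 2)) + int m * (int m - 1) * (int m - 2)"
    using card_G2[of m] choose3_int[of "Suc m"] choose3_int[of m] by simp
  have e1: "4 * int (card (T (2*Suc m))) = int (Suc m) * (int (Suc m) - 1)^2 * (int (Suc m) - 2)"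
  proof -
    have "12 * int (card (T (2*Suc m))) = 3 * (4 * int (card (T (2*m+1)))) + 2 * (6 * int (card (G2 (Suc m))))"
      using a by simp
    also have "\<dots> = 12 * (int (Suc m) * (int (Suc m) - 1)^2 * (int (Suc m) - 2)) div 4"
      using Suc.IH b by (simp add: algebra_simps power2_eq_square)
    finally show ?thesis by (simp add: algebra_simps power2_eq_square)
  qed
  have c: "4 * int (card (T (2*Suc m+1))) = 4 * int (card (T (2*Suc m))) + 4 * int (card (G1 (Suc m)))"
    using rec_odd[of "Suc m"] by simp
  have d: "6 * int (card (G1 (Suc m))) = int (Suc (Suc m)) * (int (Suc (Suc m)) - 1) * (int (Suc (Suc m)) - 2) + 2 * (int (Suc m) * (int (Suc m) - 1) * (int (Suc m) - 2))"
    using card_G1[of "Suc m"] choose3_int[of "Suc (Suc m)"] choose3_int[of "Suc m"] by simp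
  have e2: "4 * int (card (T (2*Suc m+1))) = (int (Suc m))^2 * (int (Suc m) - 1)^2"
  proof -
    have "12 * int (card (T (2*Suc m+1))) = 3 * (4 * int (card (T (2*Suc m)))) + 2 * (6 * int (card (G1 (Suc m))))"
      using c by simp
    also have "\<dots> = 12 * ((int (Suc m))^2 * (int (Suc m) - 1)^2) div 4"
      using e1 d by (simp add: algebra_simps power2_eq_square)
    finally show ?thesis by (simp add: algebra_simps power2_eq_square)
  qed
  show ?case using e1 e2 by simp
qed

lemma Mn_col:
  assumes "notH n i j"
  shows "Mn n i j = (if col n (i+j) then 1 else -1)"
proof (cases "even n")
  case True
  then obtain m where n: "n = 2*m" by auto
  have c: "(j \<ge> i + 2 \<and> real (n + 2) / 2 - real i \<le> real j \<and> int j \<le> int n - int i)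
           \<or> (j \<ge> i + 2 \<and> real j \<ge> real (3 * n + 2) / 2 - real i) \<longleftrightarrow> col n (i+j)"
    using assms unfolding n col_even notH_def by (auto simp: field_simps)
  show ?thesis using assms True c unfolding Mn_def notH_def by auto
next
  case False
  then obtain m where n: "n = 2*m+1" using oddE by blast
  have c: "(j \<ge> i + 2 \<and> real (n + 3) / 2 - real i \<le> real j \<and> int j \<le> int n - int i)
           \<or> (j \<ge> i + 2 \<and> real j \<ge> real (3 * n + 1) / 2 - real i) \<longleftrightarrow> col n (i+j)"
    using assms unfolding n col_odd notH_def by (auto simp: field_simps)
  show ?thesis using assms False c unfolding Mn_def notH_def by auto
qed

lemma eps_T:
  assumes "\<And>i j. notH n i j \<Longrightarrow> N i j = col n (i+j)"
  shows "eps n N = card (T n)"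
proof -
  let ?E = "{((i, j), (k, l)). notH n i j \<and> notH n k l \<and> (i < k \<or> (i = k \<and> j < l))
      \<and> N i j = N k l \<and> alternate i j k l}"
  let ?g = "\<lambda>(i::nat,k::nat,j::nat,l::nat). ((i,j),(k,l))"
  have "?E = ?g ` T n"
  proof (rule set_eqI, rule iffI)
    fix x assume "x \<in> ?E"
    then obtain i j k l where x: "x = ((i,j),(k,l))" and h: "notH n i j" "notH n k l" "i < k \<or> (i = k \<and> j < l)"
      "N i j = N k l" "alternate i j k l" by auto
    have o: "i < k" "k < j" "j < l" using h unfolding alternate_def notH_def by auto
    have "(i,k,j,l) \<in> T n" using h o assms[OF h(1)] assms[OF h(2)] unfolding T_def notH_def by auto
    then show "x \<in> ?g ` T n" using x by force
  next
    fix x assume "x \<in> ?g ` T n"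
    then obtain i k j l where x: "x = ((i,j),(k,l))" and h: "1 \<le> i" "i < k" "k < j" "j < l" "l \<le> n" "col n (i+j) = col n (k+l)"
      by (auto simp: T_def)
    have nh: "notH n i j" "notH n k l" using h unfolding notH_def by auto
    show "x \<in> ?E" using x h nh assms[OF nh(1)] assms[OF nh(2)] by (auto simp: alternate_def)
  qed
  moreover have "inj_on ?g (T n)" by (auto simp: inj_on_def)
  ultimately show ?thesis unfolding eps_def by (simp add: card_image)
qed

lemma Z_even: "Z (2*m) = (real m * (real m - 1)^2 * (real m - 2)) / 4"
proof -
  have f1: "\<lfloor>real (2*m) / 2\<rfloor> = int m" by simp
  have f2: "\<lfloor>(real (2*m) - 1) / 2\<rfloor> = int m - 1" by (intro floor_unique) (auto simp: field_simps)
  have f3: "\<lfloor>(real (2*m) - 2) / 2\<rfloor> = int m - 1" by (intro floor_unique) (auto simp: field_simps)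
  have f4: "\<lfloor>(real (2*m) - 3) / 2\<rfloor> = int m - 2" by (intro floor_unique) (auto simp: field_simps)
  show ?thesis unfolding Z_def f1 f2 f3 f4 by (simp add: power2_eq_square)
qed

lemma Z_odd: "Z (2*m+1) = ((real m)^2 * (real m - 1)^2) / 4"
proof -
  have f1: "\<lfloor>real (2*m+1) / 2\<rfloor> = int m" by (intro floor_unique) (auto simp: field_simps)
  have f2: "\<lfloor>(real (2*m+1) - 1) / 2\<rfloor> = int m" by (intro floor_unique) (auto simp: field_simps)
  have f3: "\<lfloor>(real (2*m+1) - 2) / 2\<rfloor> = int m - 1" by (intro floor_unique) (auto simp: field_simps)
  have f4: "\<lfloor>(real (2*m+1) - 3) / 2\<rfloor> = int m - 1" by (intro floor_unique) (auto simp: field_simps)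
  show ?thesis unfolding Z_def f1 f2 f3 f4 by (simp add: power2_eq_square)
qed

lemma card_T_Z: "real (card (T n)) = Z n"
proof (cases "even n")
  case True
  then obtain m where n: "n = 2*m" by auto
  have "4 * int (card (T (2*m))) = int m * (int m - 1)^2 * (int m - 2)" using closed[of m] by simp
  then have "real_of_int (4 * int (card (T (2*m)))) = real_of_int (int m * (int m - 1)^2 * (int m - 2))" by simp
  then have "4 * real (card (T (2*m))) = real m * (real m - 1)^2 * (real m - 2)" by simp
  then show ?thesis unfolding n Z_even by simp
next
  case False
  then obtain m where n: "n = 2*m+1" using oddE by blast
  have "4 * int (card (T (2*m+1))) = (int m)^2 * (int m - 1)^2" using closed[of m] by simp
  then have "real_of_int (4 * int (card (T (2*m+1)))) = real_of_int ((int m)^2 * (int m - 1)^2)" by simp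
  then have "4 * real (card (T (2*m+1))) = (real m)^2 * (real m - 1)^2" by simp
  then show ?thesis unfolding n Z_odd by simp
qed

theorem lemma2p3:
  fixes n :: nat and N :: "nat \<Rightarrow> nat \<Rightarrow> bool"
  assumes "n \<ge> 1"
    and "\<forall>i \<in> {1..n}. \<forall>j \<in> {1..n}. Mdiag n N i j = Mn n i j"
  shows "real (eps n N) = Z n"
proof -
  have "\<And>i j. notH n i j \<Longrightarrow> N i j = col n (i+j)"
  proof -
    fix i j assume h: "notH n i j"
    then have "i \<in> {1..n}" "j \<in> {1..n}" unfolding notH_def by auto
    then have "Mdiag n N i j = Mn n i j" using assms(2) by blast
    then show "N i j = col n (i+j)" using h Mn_col[OF h] unfolding Mdiag_def notH_def
      by (auto split: if_splits)
  qed
  then have "eps n N = card (T n)" by (rule eps_T)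
  then show ?thesis using card_T_Z by simp
qed

end
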